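(* Let $Z$ be a decision structure and $P$ a modular partition of $N(Z)$. Then the quotient $Z/P$ is a decision structure (in particular it is acyclic, has a unique source, and no two arcs leaving the same node share a label; and there is at most one arc between any ordered pair of blocks). Moreover, if $P$ is a maximal partition, then $Z/P$ is prime.
   Context: A decision structure is a finite directed acyclic graph $Z=(N,A)$, $A\subseteq N\times N$, with a unique source (node with no incoming arc), together with an arc labelling $\ell:A\to\mathcal{R}$ (into a set $\mathcal{R}$ of return values) and a node labelling by actions, such that distinct arcs leaving the same node have distinct labels; the arc out of $v$ labelled $r$, if it exists, is the $r$-arc out of $v$. For $X\subseteq N$, $Z[X]$ is the induced subgraph with inherited labels. A subset $X\subseteq N(Z)$ is a module of $Z$ if $Z[X]$ has a unique source (so is a decision structure) and for every node $v\notin X$: (i) every arc from $v$ to a node of $X$ ends at the source of $Z[X]$; (ii) if for some $x\in X$ there is an arc from $x$ to $v$ labelled $r$, then every $x'\in X$ has an $r$-arc, and this arc ends either at $v$ or at a node of $X$. The modules $N(Z)$ and $\{v\}$ ($v\in N(Z)$) are trivial; $Z$ is prime if all its modules are trivial. A module is maximal if it is a proper subset of $N(Z)$ and is contained in no module other than itself and $N(Z)$. A modular partition is a partition of $N(Z)$ all of whose blocks are modules; it is a maximal partition if all blocks are maximal modules. For a partition $P$ of $N(Z)$, the quotient $Z/P$ is the arc-labelled graph with node set $P$ having an arc $(S,T)$, $S\neq T$, labelled $r$ whenever some arc labelled $r$ goes from a node of $S$ to a node of $T$ (node labels of the quotient are immaterial here). The graphs $Z[S]$, $S\in P$, are the factors.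 *)

theory Defs
  imports Main "HOL-Library.Disjoint_Sets"
begin

text \<open>The paper's arc set
  A is the set of pairs (u,v) occurring in E; A \<subseteq> N \<times> N and the labelling is a
  function on A, i.e. at most one label (= at most one arc) per ordered pair.
  Node labels (actions) play no role in modules or quotients and are omitted.\<close>

definition arc_rel :: "('a \<times> 'r \<times> 'a) set \<Rightarrow> ('a \<times> 'a) set" where
  "arc_rel E = {(u, v). \<exists>r. (u, r, v) \<in> E}"

definition is_source :: "'a set \<Rightarrow> ('a \<times> 'r \<times> 'a) set \<Rightarrow> 'a \<Rightarrow> bool" where
  "is_source N E s \<longleftrightarrow> s \<in> N \<and> (\<forall>u r. (u, r, s) \<notin> E)"

definition decision_structure :: "'a set \<Rightarrow> ('a \<times> 'r \<times> 'a) set \<Rightarrow> bool" where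
  "decision_structure N E \<longleftrightarrow>
     finite N \<and>
     E \<subseteq> N \<times> UNIV \<times> N \<and>
     (\<forall>u v r r'. (u, r, v) \<in> E \<longrightarrow> (u, r', v) \<in> E \<longrightarrow> r = r') \<and>
     acyclic (arc_rel E) \<and>
     (\<exists>!s. is_source N E s) \<and>
     (\<forall>v r w w'. (v, r, w) \<in> E \<longrightarrow> (v, r, w') \<in> E \<longrightarrow> w = w')"

definition induced_arcs :: "('a \<times> 'r \<times> 'a) set \<Rightarrow> 'a set \<Rightarrow> ('a \<times> 'r \<times> 'a) set" where
  "induced_arcs E X = {(u, r, v). (u, r, v) \<in> E \<and> u \<in> X \<and> v \<in> X}"

definition is_module :: "'a set \<Rightarrow> ('a \<times> 'r \<times> 'a) set \<Rightarrow> 'a set \<Rightarrow> bool" where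
  "is_module N E X \<longleftrightarrow>
     X \<subseteq> N \<and>
     (\<exists>!s. is_source X (induced_arcs E X) s) \<and>
     (\<forall>v \<in> N - X.
        (\<forall>r x. x \<in> X \<longrightarrow> (v, r, x) \<in> E \<longrightarrow> is_source X (induced_arcs E X) x) \<and>
        (\<forall>r. (\<exists>x \<in> X. (x, r, v) \<in> E) \<longrightarrow>
              (\<forall>x' \<in> X. \<exists>w. (x', r, w) \<in> E \<and> (w = v \<or> w \<in> X))))"

definition trivial_module :: "'a set \<Rightarrow> 'a set \<Rightarrow> bool" where
  "trivial_module N X \<longleftrightarrow> X = N \<or> (\<exists>v \<in> N. X = {v})"

definition prime_ds :: "'a set \<Rightarrow> ('a \<times> 'r \<times> 'a) set \<Rightarrow> bool" where
  "prime_ds N E \<longleftrightarrow> (\<forall>X. is_module N E X \<longrightarrow> trivial_module N X)"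

definition maximal_module :: "'a set \<Rightarrow> ('a \<times> 'r \<times> 'a) set \<Rightarrow> 'a set \<Rightarrow> bool" where
  "maximal_module N E X \<longleftrightarrow>
     is_module N E X \<and> X \<subset> N \<and>
     (\<forall>Y. is_module N E Y \<longrightarrow> X \<subseteq> Y \<longrightarrow> Y = X \<or> Y = N)"

definition modular_partition :: "'a set \<Rightarrow> ('a \<times> 'r \<times> 'a) set \<Rightarrow> 'a set set \<Rightarrow> bool" where
  "modular_partition N E P \<longleftrightarrow> partition_on N P \<and> (\<forall>S \<in> P. is_module N E S)"

definition maximal_partition :: "'a set \<Rightarrow> ('a \<times> 'r \<times> 'a) set \<Rightarrow> 'a set set \<Rightarrow> bool" where
  "maximal_partition N E P \<longleftrightarrow> partition_on N P \<and> (\<forall>S \<in> P. maximal_module N E S)"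

definition quotient_arcs :: "('a \<times> 'r \<times> 'a) set \<Rightarrow> 'a set set \<Rightarrow> ('a set \<times> 'r \<times> 'a set) set" where
  "quotient_arcs E P = {(S, r, T). S \<in> P \<and> T \<in> P \<and> S \<noteq> T \<and>
                          (\<exists>u \<in> S. \<exists>v \<in> T. (u, r, v) \<in> E)}"

end

theory Submission
  imports Defs
begin

definition src :: "('a \<times> 'r \<times> 'a) set \<Rightarrow> 'a set \<Rightarrow> 'a" where
  "src E S = (THE s. is_source S (induced_arcs E S) s)"

lemma src_is: "is_module N E S \<Longrightarrow> is_source S (induced_arcs E S) (src E S)"
  unfolding is_module_def src_def by (metis theI')

lemma src_unique: "is_module N E S \<Longrightarrow> is_source S (induced_arcs E S) y \<Longrightarrow> y = src E S"
  unfolding is_module_def src_def by (metis the1_equality)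

lemma src_in: "is_module N E S \<Longrightarrow> src E S \<in> S"
  using src_is unfolding is_source_def by metis

lemma src_noin: "is_module N E S \<Longrightarrow> u \<in> S \<Longrightarrow> (u, r, src E S) \<notin> E"
  using src_is[of N E S] src_in[of N E S] unfolding is_source_def induced_arcs_def by blast

lemma into_src:
  assumes "is_module N E S" "v \<in> N" "v \<notin> S" "(v, r, x) \<in> E" "x \<in> S"
  shows "x = src E S"
proof -
  have "is_source S (induced_arcs E S) x" using assms unfolding is_module_def by blast
  thus ?thesis using src_unique assms(1) by metis
qed

lemma out_mod:
  assumes "is_module N E S" "v \<in> N" "v \<notin> S" "(x, r, v) \<in> E" "x \<in> S" "x' \<in> S"
  shows "\<exists>w. (x', r, w) \<in> E \<and> (w = v \<or> w \<in> S)"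
  using assms unfolding is_module_def by blast

locale dsmp =
  fixes N :: "'a set" and E :: "('a \<times> 'r \<times> 'a) set" and P :: "'a set set"
  assumes ds: "decision_structure N E" and mp: "modular_partition N E P"
begin

lemma finN: "finite N" using ds unfolding decision_structure_def by blast
lemma EN: "(u, r, v) \<in> E \<Longrightarrow> u \<in> N \<and> v \<in> N" using ds unfolding decision_structure_def by blast
lemma lab: "(u, r, v) \<in> E \<Longrightarrow> (u, r', v) \<in> E \<Longrightarrow> r = r'"
  using ds unfolding decision_structure_def by blast
lemma det: "(u, r, v) \<in> E \<Longrightarrow> (u, r, v') \<in> E \<Longrightarrow> v = v'"
  using ds unfolding decision_structure_def by blast
lemma acyc: "acyclic (arc_rel E)" using ds unfolding decision_structure_def by blast
lemma srcZ: "\<exists>!s. is_source N E s" using ds unfolding decision_structure_def by blast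

lemma part: "partition_on N P" using mp unfolding modular_partition_def by blast
lemma modP: "S \<in> P \<Longrightarrow> is_module N E S" using mp unfolding modular_partition_def by blast
lemma PsubN: "S \<in> P \<Longrightarrow> S \<subseteq> N" using part partition_onD1 by blast
lemma Pne: "S \<in> P \<Longrightarrow> S \<noteq> {}" using part partition_onD3 by blast
lemma Pdisj: "S \<in> P \<Longrightarrow> T \<in> P \<Longrightarrow> x \<in> S \<Longrightarrow> x \<in> T \<Longrightarrow> S = T"
  using part partition_onD2 unfolding disjoint_def by blast
lemma Pcov: "x \<in> N \<Longrightarrow> \<exists>S\<in>P. x \<in> S" using part partition_onD1 by blast
lemma finP: "finite P" using finite_elements[OF finN part] .

lemma reach:
  assumes S: "S \<in> P" shows "x \<in> S \<Longrightarrow> (src E S, x) \<in> (arc_rel E)\<^sup>*"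
proof -
  let ?R = "arc_rel (induced_arcs E S)"
  have sub: "?R \<subseteq> arc_rel E" unfolding arc_rel_def induced_arcs_def by blast
  have "?R \<subseteq> S \<times> S" unfolding arc_rel_def induced_arcs_def by blast
  moreover have "finite S" using PsubN[OF S] finN finite_subset by blast
  ultimately have fin: "finite ?R" by (meson finite_SigmaI finite_subset)
  have "wf ?R" using finite_acyclic_wf[OF fin acyclic_subset[OF acyc sub]] .
  then show "x \<in> S \<Longrightarrow> (src E S, x) \<in> (arc_rel E)\<^sup>*"
  proof (induction x rule: wf_induct_rule)
    case (less x)
    show ?case
    proof (cases "\<exists>y. (y, x) \<in> ?R")
      case True
      then obtain y where y: "(y, x) \<in> ?R" by blast
      hence "y \<in> S" "(y, x) \<in> arc_rel E" unfolding arc_rel_def induced_arcs_def by auto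
      thus ?thesis using less y by (meson rtrancl.rtrancl_into_rtrancl)
    next
      case False
      hence "is_source S (induced_arcs E S) x" using less.prems
        unfolding is_source_def arc_rel_def by blast
      hence "x = src E S" using src_unique modP[OF S] by metis
      thus ?thesis by simp
    qed
  qed
qed

lemma sink:
  assumes S: "S \<in> P" shows "\<exists>x\<in>S. \<forall>r y. (x, r, y) \<in> E \<longrightarrow> y \<notin> S"
proof -
  let ?R = "(arc_rel (induced_arcs E S))\<inverse>"
  have sub: "arc_rel (induced_arcs E S) \<subseteq> arc_rel E" unfolding arc_rel_def induced_arcs_def by blast
  have "?R \<subseteq> S \<times> S" unfolding arc_rel_def induced_arcs_def by blast
  moreover have "finite S" using PsubN[OF S] finN finite_subset by blast
  ultimately have fin: "finite ?R" by (meson finite_SigmaI finite_subset)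
  have "acyclic ?R" using acyclic_subset[OF acyc sub] acyclic_converse by blast
  hence "wf ?R" using finite_acyclic_wf[OF fin] by blast
  moreover obtain x0 where "x0 \<in> S" using Pne[OF S] by blast
  ultimately obtain z where "z \<in> S" "\<forall>y. (y, z) \<in> ?R \<longrightarrow> y \<notin> S"
    unfolding wf_eq_minimal by metis
  thus ?thesis unfolding arc_rel_def induced_arcs_def by blast
qed

abbreviation "Q \<equiv> quotient_arcs E P"

lemma qarc:
  assumes "(S, r, T) \<in> Q"
  shows "S \<in> P \<and> T \<in> P \<and> S \<noteq> T \<and> (\<exists>u\<in>S. (u, r, src E T) \<in> E)"
proof -
  from assms have ST: "S \<in> P" "T \<in> P" "S \<noteq> T" and "\<exists>u \<in> S. \<exists>v \<in> T. (u, r, v) \<in> E"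
    unfolding quotient_arcs_def by auto
  then obtain u v where uv: "u \<in> S" "v \<in> T" "(u, r, v) \<in> E" by blast
  have "u \<notin> T" using Pdisj ST uv by blast
  hence "v = src E T" using into_src[OF modP[OF ST(2)] _ _ uv(3) uv(2)] EN uv(3) by blast
  thus ?thesis using ST uv by blast
qed

lemma Qlab: "(S, r, T) \<in> Q \<Longrightarrow> (S, r', T) \<in> Q \<Longrightarrow> r = r'"
proof (rule ccontr)
  assume a: "(S, r, T) \<in> Q" "(S, r', T) \<in> Q" "r \<noteq> r'"
  from qarc[OF a(1)] obtain u where u: "S \<in> P" "T \<in> P" "S \<noteq> T" "u \<in> S" "(u, r, src E T) \<in> E" by blast
  from qarc[OF a(2)] obtain u' where u': "u' \<in> S" "(u', r', src E T) \<in> E" by blast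
  let ?t = "src E T"
  have tN: "?t \<in> N" "?t \<notin> S" using src_in[OF modP[OF u(2)]] PsubN[OF u(2)] Pdisj u by blast+
  obtain x where x: "x \<in> S" "\<forall>r y. (x, r, y) \<in> E \<longrightarrow> y \<notin> S" using sink[OF u(1)] by blast
  obtain w where w: "(x, r, w) \<in> E" "w = ?t \<or> w \<in> S"
    using out_mod[OF modP[OF u(1)] tN u(5) u(4) x(1)] by blast
  obtain w' where w': "(x, r', w') \<in> E" "w' = ?t \<or> w' \<in> S"
    using out_mod[OF modP[OF u(1)] tN u'(2) u'(1) x(1)] by blast
  have "w = ?t" "w' = ?t" using w w' x by blast+
  thus False using lab w w' a(3) by metis
qed

lemma Qdet: "(S, r, T) \<in> Q \<Longrightarrow> (S, r, T') \<in> Q \<Longrightarrow> T = T'"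
proof -
  assume a: "(S, r, T) \<in> Q" "(S, r, T') \<in> Q"
  from qarc[OF a(1)] obtain u where u: "S \<in> P" "T \<in> P" "S \<noteq> T" "u \<in> S" "(u, r, src E T) \<in> E" by blast
  from qarc[OF a(2)] obtain u' where u': "T' \<in> P" "S \<noteq> T'" "u' \<in> S" "(u', r, src E T') \<in> E" by blast
  have tN: "src E T \<in> N" "src E T \<notin> S" "src E T \<in> T"
    using src_in[OF modP[OF u(2)]] PsubN[OF u(2)] Pdisj u by blast+
  have t'N: "src E T' \<notin> S" "src E T' \<in> T'"
    using src_in[OF modP[OF u'(1)]] Pdisj u u' by blast+
  obtain w where w: "(u', r, w) \<in> E" "w = src E T \<or> w \<in> S"
    using out_mod[OF modP[OF u(1)] tN(1,2) u(5) u(4) u'(3)] by blast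
  have "w = src E T'" using det w(1) u'(4) by blast
  hence "src E T' = src E T" using w t'N by blast
  thus ?thesis using Pdisj u(2) u'(1) tN(3) t'N(2) by metis
qed

lemma Qtrancl: "(S, T) \<in> (arc_rel Q)\<^sup>+ \<Longrightarrow> (src E S, src E T) \<in> (arc_rel E)\<^sup>+"
proof (induction rule: trancl_induct)
  case (base T)
  then obtain r where "(S, r, T) \<in> Q" unfolding arc_rel_def by blast
  from qarc[OF this] obtain u where u: "S \<in> P" "u \<in> S" "(u, r, src E T) \<in> E" by blast
  have "(src E S, u) \<in> (arc_rel E)\<^sup>*" using reach u by blast
  moreover have "(u, src E T) \<in> arc_rel E" using u unfolding arc_rel_def by blast
  ultimately show ?case by (meson rtrancl_into_trancl1)
next
  case (step T U)
  then obtain r where "(T, r, U) \<in> Q" unfolding arc_rel_def by blast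
  from qarc[OF this] obtain u where u: "T \<in> P" "u \<in> T" "(u, r, src E U) \<in> E" by blast
  have "(src E T, u) \<in> (arc_rel E)\<^sup>*" using reach u by blast
  moreover have "(u, src E U) \<in> arc_rel E" using u unfolding arc_rel_def by blast
  ultimately have "(src E T, src E U) \<in> (arc_rel E)\<^sup>+" by (meson rtrancl_into_trancl1)
  thus ?case using step.IH by (meson trancl_trans)
qed

lemma Qacyc: "acyclic (arc_rel Q)"
  unfolding acyclic_def
proof (intro allI notI)
  fix S assume "(S, S) \<in> (arc_rel Q)\<^sup>+"
  hence "(src E S, src E S) \<in> (arc_rel E)\<^sup>+" by (rule Qtrancl)
  thus False using acyc unfolding acyclic_def by blast
qed

lemma Qsource: "\<exists>!S. is_source P Q S"
proof -
  obtain s0 where s0: "is_source N E s0" using srcZ by blast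
  have s0N: "s0 \<in> N" using s0 unfolding is_source_def by blast
  obtain S0 where S0: "S0 \<in> P" "s0 \<in> S0" using Pcov[OF s0N] by blast
  have ex: "is_source P Q S0"
    unfolding is_source_def
  proof (intro conjI allI S0(1))
    fix U r show "(U, r, S0) \<notin> Q"
    proof
      assume "(U, r, S0) \<in> Q"
      from qarc[OF this] obtain u where u: "U \<in> P" "U \<noteq> S0" "u \<in> U" "(u, r, src E S0) \<in> E" by blast
      have "is_source S0 (induced_arcs E S0) s0" using s0 S0 unfolding is_source_def induced_arcs_def by blast
      hence "src E S0 = s0" using src_unique[OF modP[OF S0(1)]] by metis
      thus False using u s0 unfolding is_source_def by metis
    qed
  qed
  have un: "T = S0" if T: "is_source P Q T" for T
  proof -
    have TP: "T \<in> P" using T unfolding is_source_def by blast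
    let ?t = "src E T"
    have tT: "?t \<in> T" "?t \<in> N" using src_in[OF modP[OF TP]] PsubN[OF TP] by blast+
    have "?t = s0"
    proof (rule ccontr)
      assume "?t \<noteq> s0"
      hence "\<not> is_source N E ?t" using srcZ s0 by blast
      then obtain u r where ur: "(u, r, ?t) \<in> E" using tT unfolding is_source_def by blast
      have "u \<notin> T" using src_noin[OF modP[OF TP]] ur by blast
      moreover obtain U where U: "U \<in> P" "u \<in> U" using Pcov EN ur by blast
      ultimately have "(U, r, T) \<in> Q" using TP tT ur unfolding quotient_arcs_def by blast
      thus False using T unfolding is_source_def by blast
    qed
    thus ?thesis using Pdisj TP S0 tT by blast
  qed
  show ?thesis using ex un by blast
qed

lemma part1: "decision_structure P Q"
proof -
  have "Q \<subseteq> P \<times> UNIV \<times> P" unfolding quotient_arcs_def by blast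
  moreover have "\<forall>u v r r'. (u, r, v) \<in> Q \<longrightarrow> (u, r', v) \<in> Q \<longrightarrow> r = r'"
    using Qlab by blast
  moreover have "\<forall>v r w w'. (v, r, w) \<in> Q \<longrightarrow> (v, r, w') \<in> Q \<longrightarrow> w = w'"
    using Qdet by blast
  ultimately show ?thesis unfolding decision_structure_def
    using finP Qacyc Qsource by (intro conjI) auto
qed

lemma part2:
  assumes mx: "maximal_partition N E P" and XX: "is_module P Q XX"
  shows "trivial_module P XX"
proof -
  let ?U = "\<Union>XX"
  have XXP: "XX \<subseteq> P" using XX unfolding is_module_def by blast
  define B0 where "B0 = src Q XX"
  have B0src: "is_source XX (induced_arcs Q XX) B0" using src_is[OF XX] B0_def by simp
  have B0X: "B0 \<in> XX" using B0src unfolding is_source_def by blast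
  have B0P: "B0 \<in> P" using B0X XXP by blast
  have f2: "\<exists>C r. C \<in> XX \<and> (C, r, B) \<in> Q" if "B \<in> XX" "B \<noteq> B0" for B
  proof (rule ccontr)
    assume "\<not> ?thesis"
    hence "is_source XX (induced_arcs Q XX) B" using that
      unfolding is_source_def induced_arcs_def by blast
    thus False using src_unique[OF XX] B0_def that by metis
  qed
  have f3: "B = B0" if "V \<in> P" "V \<notin> XX" "(V, r, B) \<in> Q" "B \<in> XX" for V r B
  proof -
    have "is_source XX (induced_arcs Q XX) B" using XX that unfolding is_module_def by blast
    thus ?thesis using src_unique[OF XX] B0_def by metis
  qed
  have f4: "\<exists>W. (B', r, W) \<in> Q \<and> (W = V \<or> W \<in> XX)"
    if "V \<in> P" "V \<notin> XX" "B \<in> XX" "(B, r, V) \<in> Q" "B' \<in> XX" for V B r B'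
    using XX that unfolding is_module_def by blast
  define s where "s = src E B0"
  have sB0: "s \<in> B0" using src_in[OF modP[OF B0P]] s_def by simp
  have ssrc: "is_source ?U (induced_arcs E ?U) s"
    unfolding is_source_def
  proof (intro conjI allI)
    show "s \<in> ?U" using sB0 B0X by blast
    fix u r show "(u, r, s) \<notin> induced_arcs E ?U"
    proof
      assume "(u, r, s) \<in> induced_arcs E ?U"
      hence a: "(u, r, s) \<in> E" "u \<in> ?U" unfolding induced_arcs_def by auto
      then obtain B where B: "B \<in> XX" "u \<in> B" by blast
      show False
      proof (cases "B = B0")
        case True thus False using src_noin[OF modP[OF B0P]] a B s_def by blast
      next
        case False
        have "(B, r, B0) \<in> Q" using B False XXP B0P a sB0 unfolding quotient_arcs_def by blast
        hence "(B, r, B0) \<in> induced_arcs Q XX" using B B0X unfolding induced_arcs_def by blast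
        thus False using B0src unfolding is_source_def by blast
      qed
    qed
  qed
  have suniq: "y = s" if y: "is_source ?U (induced_arcs E ?U) y" for y
  proof -
    obtain B where B: "B \<in> XX" "y \<in> B" using y unfolding is_source_def by blast
    have BP: "B \<in> P" using B XXP by blast
    have "is_source B (induced_arcs E B) y" using y B unfolding is_source_def induced_arcs_def by blast
    hence yB: "y = src E B" using src_unique[OF modP[OF BP]] by metis
    have "B = B0"
    proof (rule ccontr)
      assume "B \<noteq> B0"
      then obtain C r where C: "C \<in> XX" "(C, r, B) \<in> Q" using f2 B by blast
      from qarc[OF C(2)] obtain u where "u \<in> C" "(u, r, src E B) \<in> E" by blast
      hence "(u, r, y) \<in> induced_arcs E ?U" using C B yB unfolding induced_arcs_def by blast
      thus False using y unfolding is_source_def by blast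
    qed
    thus ?thesis using yB s_def by simp
  qed
  have UN: "?U \<subseteq> N" using XXP PsubN by blast
  have modU: "is_module N E ?U"
    unfolding is_module_def
  proof (intro conjI ballI allI impI)
    show "?U \<subseteq> N" by (rule UN)
    show "\<exists>!s. is_source ?U (induced_arcs E ?U) s" using ssrc suniq by blast
  next
    fix v r x assume v: "v \<in> N - ?U" and x: "x \<in> ?U" and e: "(v, r, x) \<in> E"
    obtain B where B: "B \<in> XX" "x \<in> B" using x by blast
    obtain V where V: "V \<in> P" "v \<in> V" using Pcov v by blast
    have VX: "V \<notin> XX" using V v by blast
    have "(V, r, B) \<in> Q" using V B VX XXP e unfolding quotient_arcs_def by blast
    hence "B = B0" using f3 V VX B by blast
    hence "x = s" using into_src[OF modP[OF B0P], of v r x] v e B s_def by blast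
    thus "is_source ?U (induced_arcs E ?U) x" using ssrc by simp
  next
    fix v r x' assume v: "v \<in> N - ?U" and ex: "\<exists>x\<in>?U. (x, r, v) \<in> E" and x': "x' \<in> ?U"
    obtain x where x: "x \<in> ?U" "(x, r, v) \<in> E" using ex by blast
    obtain B where B: "B \<in> XX" "x \<in> B" using x by blast
    obtain B' where B': "B' \<in> XX" "x' \<in> B'" using x' by blast
    have BP: "B \<in> P" "B' \<in> P" using B B' XXP by blast+
    obtain V where V: "V \<in> P" "v \<in> V" using Pcov v by blast
    have VX: "V \<notin> XX" using V v by blast
    have vB: "v \<notin> B" using v B by blast
    have BV: "(B, r, V) \<in> Q" using V B VX XXP x unfolding quotient_arcs_def by blast
    show "\<exists>w. (x', r, w) \<in> E \<and> (w = v \<or> w \<in> ?U)"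
    proof (cases "B' = B")
      case True
      thus ?thesis using out_mod[OF modP[OF BP(1)] _ vB x(2) B(2), of x'] v B' B by blast
    next
      case False
      obtain W where W: "(B', r, W) \<in> Q" "W = V \<or> W \<in> XX" using f4[OF V(1) VX B(1) BV B'(1)] by blast
      from qarc[OF W(1)] obtain y where y: "W \<in> P" "B' \<noteq> W" "y \<in> B'" "(y, r, src E W) \<in> E" by blast
      have wW: "src E W \<in> W" "src E W \<in> N" using src_in[OF modP[OF y(1)]] PsubN[OF y(1)] by blast+
      have wB': "src E W \<notin> B'" using Pdisj y BP wW by blast
      obtain w' where w': "(x', r, w') \<in> E" "w' = src E W \<or> w' \<in> B'"
        using out_mod[OF modP[OF BP(2)] wW(2) wB' y(4) y(3) B'(2)] by blast
      show ?thesis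
      proof (cases "w' \<in> B'")
        case True thus ?thesis using w' B' by blast
      next
        case False
        hence w'e: "w' = src E W" using w' by blast
        show ?thesis
        proof (cases "W = V")
          case False thus ?thesis using W w' w'e wW B' by blast
        next
          case True
          have xV: "x \<notin> V" using x B VX Pdisj BP V by blast
          have "v = src E V" using into_src[OF modP[OF V(1)] _ xV x(2) V(2)] EN x(2) by blast
          thus ?thesis using w' w'e True by blast
        qed
      qed
    qed
  qed
  have mB0: "maximal_module N E B0" using mx B0P unfolding maximal_partition_def by blast
  have "B0 \<subseteq> ?U" using B0X by blast
  hence "?U = B0 \<or> ?U = N" using mB0 modU unfolding maximal_module_def by blast
  thus ?thesis
  proof
    assume h: "?U = B0"
    have "XX = {B0}"
    proof (intro set_eqI iffI)
      fix B assume "B \<in> XX"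
      moreover then obtain b where "b \<in> B" using Pne XXP by blast
      ultimately show "B \<in> {B0}" using h Pdisj XXP B0P by blast
    qed (use B0X in blast)
    thus ?thesis unfolding trivial_module_def using B0P by blast
  next
    assume h: "?U = N"
    have "XX = P"
    proof (intro set_eqI iffI)
      fix T assume T: "T \<in> P"
      then obtain t where t: "t \<in> T" using Pne by blast
      hence "t \<in> ?U" using h PsubN T by blast
      then obtain B where "B \<in> XX" "t \<in> B" by blast
      thus "T \<in> XX" using Pdisj XXP T t by blast
    qed (use XXP in blast)
    thus ?thesis unfolding trivial_module_def by blast
  qed
qed

end

theorem mainTheorem5:
  fixes N :: "'a set" and E :: "('a \<times> 'r \<times> 'a) set" and P :: "'a set set"
  assumes "decision_structure N E"
    and "modular_partition N E P"
  shows "decision_structure P (quotient_arcs E P)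
         \<and> (maximal_partition N E P \<longrightarrow> prime_ds P (quotient_arcs E P))"
proof -
  interpret dsmp N E P using assms by (unfold_locales)
  show ?thesis using part1 part2 unfolding prime_ds_def by blast
qed

end
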